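(* Let $n\ge 1$ and let $\mathrm{metric}$ be a performance metric of the form $$\mathrm{metric}(\hat{\mathbf y},\mathbf y)=\sum_{j=1}^{J}\frac{a_j\,\mathrm{TP}+b_j\,\mathrm{TN}+f_j(\mathrm{PP},\mathrm{AP})}{g_j(\mathrm{PP},\mathrm{AP})},\qquad \hat{\mathbf y},\mathbf y\in\{0,1\}^n .$$ Let $\mathcal P$ and $\mathcal Q$ be arbitrary probability distributions on $\{0,1\}^n$, and let $\hat{\mathbf Y}\sim\mathcal P$ and $\check{\mathbf Y}\sim\mathcal Q$ be independent. Then $$\mathbb E_{\hat{\mathbf Y}\sim\mathcal P,\ \check{\mathbf Y}\sim\mathcal Q}\big[\mathrm{metric}(\hat{\mathbf Y},\check{\mathbf Y})\big]=\sum_{k=0}^{n}\sum_{l=0}^{n}\sum_{j=1}^{J}\frac{1}{g_j(k,l)}\Big\{a_j\,[\mathbf p_k^1\cdot\mathbf q_l^1]+b_j\,[\mathbf p_k^0\cdot\mathbf q_l^0]+f_j(k,l)\,r_k\,s_l\Big\}.$$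
   Context: For $\hat{\mathbf y},\mathbf y\in\{0,1\}^n$ (first argument = prediction, second = reference label): $\mathrm{TP}=\sum_i\hat y_iy_i$, $\mathrm{TN}=\sum_i(1-\hat y_i)(1-y_i)$, $\mathrm{PP}=\sum_i\hat y_i$, $\mathrm{AP}=\sum_i y_i$. In the metric, $a_j,b_j\in\mathbb R$ are constants and $f_j,g_j:\{0,\dots,n\}^2\to\mathbb R$ are functions with $g_j(k,l)\neq 0$ for all $k,l$. Marginal notation: for $a\in\{0,1\}$ and $k\in\{0,\dots,n\}$, $\mathbf p_k^a\in\mathbb R^n$ has entries $(\mathbf p_k^a)_i=\mathcal P(\hat Y_i=a,\ \sum_{i'}\hat Y_{i'}=k)$ and $r_k=\mathcal P(\sum_i\hat Y_i=k)$; similarly $(\mathbf q_l^a)_i=\mathcal Q(\check Y_i=a,\ \sum_{i'}\check Y_{i'}=l)$ and $s_l=\mathcal Q(\sum_i\check Y_i=l)$. The dot denotes the Euclidean inner product on $\mathbb R^n$. *)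

theory Defs
  imports "HOL-Probability.Probability"
begin

text \<open>Binary vectors in {0,1}^n are modelled as functions 'n \<Rightarrow> bool on a finite
  index type 'n with n = CARD('n); True encodes 1 and False encodes 0.\<close>

definition TP :: "('n::finite \<Rightarrow> bool) \<Rightarrow> ('n \<Rightarrow> bool) \<Rightarrow> nat" where
  "TP yh y = (\<Sum>i\<in>UNIV. of_bool (yh i) * of_bool (y i))"

definition TN :: "('n::finite \<Rightarrow> bool) \<Rightarrow> ('n \<Rightarrow> bool) \<Rightarrow> nat" where
  "TN yh y = (\<Sum>i\<in>UNIV. (1 - of_bool (yh i)) * (1 - of_bool (y i)))"

definition PP :: "('n::finite \<Rightarrow> bool) \<Rightarrow> ('n \<Rightarrow> bool) \<Rightarrow> nat" where
  "PP yh y = (\<Sum>i\<in>UNIV. of_bool (yh i))"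

definition AP :: "('n::finite \<Rightarrow> bool) \<Rightarrow> ('n \<Rightarrow> bool) \<Rightarrow> nat" where
  "AP yh y = (\<Sum>i\<in>UNIV. of_bool (y i))"

definition metric ::
  "nat \<Rightarrow> (nat \<Rightarrow> real) \<Rightarrow> (nat \<Rightarrow> real) \<Rightarrow> (nat \<Rightarrow> nat \<Rightarrow> nat \<Rightarrow> real) \<Rightarrow>
   (nat \<Rightarrow> nat \<Rightarrow> nat \<Rightarrow> real) \<Rightarrow> ('n::finite \<Rightarrow> bool) \<Rightarrow> ('n \<Rightarrow> bool) \<Rightarrow> real" where
  "metric J a b f g yh y =
     (\<Sum>j=1..J. (a j * real (TP yh y) + b j * real (TN yh y) + f j (PP yh y) (AP yh y))
                / g j (PP yh y) (AP yh y))"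

definition ones :: "('n::finite \<Rightarrow> bool) \<Rightarrow> nat" where
  "ones y = (\<Sum>i\<in>UNIV. of_bool (y i))"

definition marg :: "('n::finite \<Rightarrow> bool) pmf \<Rightarrow> bool \<Rightarrow> nat \<Rightarrow> 'n \<Rightarrow> real" where
  "marg P a k i = measure_pmf.prob P {y. y i = a \<and> ones y = k}"

definition cnt :: "('n::finite \<Rightarrow> bool) pmf \<Rightarrow> nat \<Rightarrow> real" where
  "cnt P k = measure_pmf.prob P {y. ones y = k}"

definition dotv :: "('n::finite \<Rightarrow> real) \<Rightarrow> ('n \<Rightarrow> real) \<Rightarrow> real" where
  "dotv u v = (\<Sum>i\<in>UNIV. u i * v i)"

end

theory Submission imports Defs begin
lemma dot_TP: "(\<Sum>x\<in>UNIV. \<Sum>y\<in>UNIV. c x * d y * real (TP x y)) =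
  (\<Sum>i\<in>UNIV. (\<Sum>x\<in>UNIV. of_bool (x i) * c x) * (\<Sum>y\<in>UNIV. of_bool (y i) * (d y::real)))"
  for c :: "('n::finite \<Rightarrow> bool) \<Rightarrow> real"
proof -
  have e: "c x * d y * real (TP x y) = (\<Sum>i\<in>UNIV. (of_bool (x i) * c x) * (of_bool (y i) * d y))" for x y
    unfolding TP_def of_nat_sum sum_distrib_left by (rule sum.cong) auto
  have "(\<Sum>x\<in>UNIV. \<Sum>y\<in>UNIV. c x * d y * real (TP x y)) =
    (\<Sum>x\<in>UNIV. \<Sum>y\<in>UNIV. \<Sum>i\<in>UNIV. (of_bool (x i) * c x) * (of_bool (y i) * d y))"
    by (simp only: e)
  also have "\<dots> = (\<Sum>x\<in>UNIV. \<Sum>i\<in>UNIV. \<Sum>y\<in>UNIV. (of_bool (x i) * c x) * (of_bool (y i) * d y))"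
    by (rule sum.cong[OF refl], rule sum.swap)
  also have "\<dots> = (\<Sum>i\<in>UNIV. \<Sum>x\<in>UNIV. \<Sum>y\<in>UNIV. (of_bool (x i) * c x) * (of_bool (y i) * d y))"
    by (rule sum.swap)
  also have "\<dots> = (\<Sum>i\<in>UNIV. (\<Sum>x\<in>UNIV. of_bool (x i) * c x) * (\<Sum>y\<in>UNIV. of_bool (y i) * (d y::real)))"
    by (simp only: sum_product)
  finally show ?thesis .
qed

lemma dot_TN: "(\<Sum>x\<in>UNIV. \<Sum>y\<in>UNIV. c x * d y * real (TN x y)) =
  (\<Sum>i\<in>UNIV. (\<Sum>x\<in>UNIV. of_bool (\<not> x i) * c x) * (\<Sum>y\<in>UNIV. of_bool (\<not> y i) * (d y::real)))"
  for c :: "('n::finite \<Rightarrow> bool) \<Rightarrow> real"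
proof -
  have e: "c x * d y * real (TN x y) = (\<Sum>i\<in>UNIV. (of_bool (\<not> x i) * c x) * (of_bool (\<not> y i) * d y))" for x y
    unfolding TN_def of_nat_sum sum_distrib_left by (rule sum.cong) auto
  have "(\<Sum>x\<in>UNIV. \<Sum>y\<in>UNIV. c x * d y * real (TN x y)) =
    (\<Sum>x\<in>UNIV. \<Sum>y\<in>UNIV. \<Sum>i\<in>UNIV. (of_bool (\<not> x i) * c x) * (of_bool (\<not> y i) * d y))"
    by (simp only: e)
  also have "\<dots> = (\<Sum>x\<in>UNIV. \<Sum>i\<in>UNIV. \<Sum>y\<in>UNIV. (of_bool (\<not> x i) * c x) * (of_bool (\<not> y i) * d y))"
    by (rule sum.cong[OF refl], rule sum.swap)
  also have "\<dots> = (\<Sum>i\<in>UNIV. \<Sum>x\<in>UNIV. \<Sum>y\<in>UNIV. (of_bool (\<not> x i) * c x) * (of_bool (\<not> y i) * d y))"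
    by (rule sum.swap)
  also have "\<dots> = (\<Sum>i\<in>UNIV. (\<Sum>x\<in>UNIV. of_bool (\<not> x i) * c x) * (\<Sum>y\<in>UNIV. of_bool (\<not> y i) * (d y::real)))"
    by (simp only: sum_product)
  finally show ?thesis .
qed

lemma prob_sum: "measure_pmf.prob (P :: ('n::finite \<Rightarrow> bool) pmf) {y. Q y} = (\<Sum>y\<in>UNIV. of_bool (Q y) * pmf P y)"
proof -
  have "measure_pmf.prob P {y. Q y} = sum (pmf P) {y. Q y}"
    by (simp add: measure_measure_pmf_finite)
  also have "\<dots> = (\<Sum>y\<in>UNIV. of_bool (Q y) * pmf P y)"
  proof -
    have "sum (pmf P) {y. Q y} = sum (pmf P) (UNIV \<inter> {y. Q y})" by simp
    also have "\<dots> = (\<Sum>y\<in>UNIV. if y \<in> {y. Q y} then pmf P y else 0)"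
      by (rule sum.inter_restrict) simp
    also have "\<dots> = (\<Sum>y\<in>UNIV. of_bool (Q y) * pmf P y)" by (rule sum.cong) auto
    finally show ?thesis .
  qed
  finally show ?thesis .
qed

lemma ones_le: "ones (x::'n::finite \<Rightarrow> bool) \<le> CARD('n)"
  unfolding ones_def by (simp add: card_mono)

lemma partition: "(\<Sum>x\<in>UNIV. h x (ones x)) =
   (\<Sum>k=0..CARD('n). \<Sum>x\<in>UNIV. of_bool (ones x = k) * h x k)"
  for h :: "('n::finite \<Rightarrow> bool) \<Rightarrow> nat \<Rightarrow> real"
proof -
  have "(\<Sum>k=0..CARD('n). \<Sum>x\<in>UNIV. of_bool (ones x = k) * h x k) =
     (\<Sum>x\<in>UNIV. \<Sum>k=0..CARD('n). of_bool (ones x = k) * h x k)" by (rule sum.swap)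
  also have "\<dots> = (\<Sum>x\<in>UNIV. h x (ones x))"
  proof (rule sum.cong[OF refl])
    fix x :: "'n \<Rightarrow> bool"
    have "(\<Sum>k=0..CARD('n). of_bool (ones x = k) * h x k) = (\<Sum>k=0..CARD('n). if ones x = k then h x k else 0)"
      by (rule sum.cong) auto
    also have "\<dots> = h x (ones x)" using ones_le[of x] by (simp add: sum.delta)
    finally show "(\<Sum>k=0..CARD('n). of_bool (ones x = k) * h x k) = h x (ones x)" .
  qed
  finally show ?thesis by simp
qed

lemma expect_pair: "measure_pmf.expectation (pair_pmf P Q) (\<lambda>(x, y). h x y) =
   (\<Sum>x\<in>UNIV. \<Sum>y\<in>UNIV. pmf P x * pmf Q y * (h x y :: real))"
  for P :: "('n::finite \<Rightarrow> bool) pmf" and Q :: "('n \<Rightarrow> bool) pmf"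
proof -
  have "measure_pmf.expectation (pair_pmf P Q) (\<lambda>(x, y). h x y) =
    (\<Sum>z\<in>UNIV. (case z of (x, y) \<Rightarrow> h x y) * pmf (pair_pmf P Q) z)"
    by (rule integral_measure_pmf_real) auto
  also have "\<dots> = (\<Sum>z\<in>UNIV. (case z of (x, y) \<Rightarrow> pmf P x * pmf Q y * (h x y :: real)))"
    by (rule sum.cong) (auto simp: pmf_pair mult_ac)
  also have "\<dots> = (\<Sum>(x,y)\<in>UNIV \<times> UNIV. pmf P x * pmf Q y * (h x y :: real))"
    by simp
  also have "\<dots> = (\<Sum>x\<in>UNIV. \<Sum>y\<in>UNIV. pmf P x * pmf Q y * (h x y :: real))"
    by (rule sum.cartesian_product[symmetric])
  finally show ?thesis .
qed

lemma marg_sum: "marg P a k i = (\<Sum>x\<in>UNIV. of_bool (x i = a) * (of_bool (ones x = k) * pmf P x))"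
  unfolding marg_def prob_sum by (rule sum.cong) auto

lemma cnt_sum: "cnt P k = (\<Sum>x\<in>UNIV. of_bool (ones x = k) * pmf P x)"
  unfolding cnt_def prob_sum by simp

theorem theorem1:
  fixes J :: nat and a b :: "nat \<Rightarrow> real" and f g :: "nat \<Rightarrow> nat \<Rightarrow> nat \<Rightarrow> real"
    and P Q :: "('n::finite \<Rightarrow> bool) pmf"
  assumes "\<And>j k l. j \<in> {1..J} \<Longrightarrow> k \<le> CARD('n) \<Longrightarrow> l \<le> CARD('n) \<Longrightarrow> g j k l \<noteq> 0"
  shows "measure_pmf.expectation (pair_pmf P Q) (\<lambda>(yh, yc). metric J a b f g yh yc) =
    (\<Sum>k=0..CARD('n). \<Sum>l=0..CARD('n). \<Sum>j=1..J.
       (1 / g j k l) * (a j * dotv (marg P True k) (marg Q True l)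
                       + b j * dotv (marg P False k) (marg Q False l)
                       + f j k l * cnt P k * cnt Q l))"
proof -
  define G where "G x y k l = pmf P x * pmf Q y *
     (\<Sum>j=1..J. (a j * real (TP x y) + b j * real (TN x y) + f j k l) / g j k l)"
    for x y :: "'n \<Rightarrow> bool" and k l
  define c where "c k x = of_bool (ones x = k) * pmf P x" for k and x :: "'n \<Rightarrow> bool"
  define d where "d l y = of_bool (ones y = l) * pmf Q y" for l and y :: "'n \<Rightarrow> bool"
  let ?N = "CARD('n)"
  have "measure_pmf.expectation (pair_pmf P Q) (\<lambda>(yh, yc). metric J a b f g yh yc) =
     (\<Sum>x\<in>UNIV. \<Sum>y\<in>UNIV. G x y (ones x) (ones y))"
    unfolding expect_pair G_def metric_def PP_def AP_def ones_def by simp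
  also have "\<dots> = (\<Sum>k=0..?N. \<Sum>x\<in>UNIV. of_bool (ones x = k) *
        (\<Sum>l=0..?N. \<Sum>y\<in>UNIV. of_bool (ones y = l) * G x y k l))"
  proof -
    have inner: "(\<Sum>y\<in>UNIV. G x y k (ones y)) = (\<Sum>l=0..?N. \<Sum>y\<in>UNIV. of_bool (ones y = l) * G x y k l)"
      for x k using partition[of "\<lambda>y l. G x y k l"] by simp
    have "(\<Sum>x\<in>UNIV. \<Sum>y\<in>UNIV. G x y (ones x) (ones y)) =
       (\<Sum>k=0..?N. \<Sum>x\<in>UNIV. of_bool (ones x = k) * (\<Sum>y\<in>UNIV. G x y k (ones y)))"
      using partition[of "\<lambda>x k. \<Sum>y\<in>UNIV. G x y k (ones y)"] by simp
    then show ?thesis by (simp only: inner)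
  qed
  also have "\<dots> = (\<Sum>k=0..?N. \<Sum>l=0..?N. \<Sum>x\<in>UNIV. \<Sum>y\<in>UNIV. c k x * d l y *
        (\<Sum>j=1..J. (a j * real (TP x y) + b j * real (TN x y) + f j k l) / g j k l))"
  proof (rule sum.cong[OF refl])
    fix k
    have "(\<Sum>x\<in>UNIV. of_bool (ones x = k) *
        (\<Sum>l=0..?N. \<Sum>y\<in>UNIV. of_bool (ones y = l) * G x y k l)) =
        (\<Sum>x\<in>UNIV. \<Sum>l=0..?N. \<Sum>y\<in>UNIV. c k x * d l y *
        (\<Sum>j=1..J. (a j * real (TP x y) + b j * real (TN x y) + f j k l) / g j k l))"
      by (simp add: sum_distrib_left G_def c_def d_def mult_ac)
    also have "\<dots> = (\<Sum>l=0..?N. \<Sum>x\<in>UNIV. \<Sum>y\<in>UNIV. c k x * d l y *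
        (\<Sum>j=1..J. (a j * real (TP x y) + b j * real (TN x y) + f j k l) / g j k l))"
      by (rule sum.swap)
    finally show "(\<Sum>x\<in>UNIV. of_bool (ones x = k) *
        (\<Sum>l=0..?N. \<Sum>y\<in>UNIV. of_bool (ones y = l) * G x y k l)) =
        (\<Sum>l=0..?N. \<Sum>x\<in>UNIV. \<Sum>y\<in>UNIV. c k x * d l y *
        (\<Sum>j=1..J. (a j * real (TP x y) + b j * real (TN x y) + f j k l) / g j k l))" .
  qed
  also have "\<dots> = (\<Sum>k=0..CARD('n). \<Sum>l=0..CARD('n). \<Sum>j=1..J.
       (1 / g j k l) * (a j * dotv (marg P True k) (marg Q True l)
                       + b j * dotv (marg P False k) (marg Q False l)
                       + f j k l * cnt P k * cnt Q l))"
  proof (rule sum.cong[OF refl], rule sum.cong[OF refl])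
    fix k l
    have "(\<Sum>x\<in>UNIV. \<Sum>y\<in>UNIV. c k x * d l y *
        (\<Sum>j=1..J. (a j * real (TP x y) + b j * real (TN x y) + f j k l) / g j k l)) =
      (\<Sum>x\<in>UNIV. \<Sum>y\<in>UNIV. \<Sum>j=1..J. c k x * d l y *
        ((a j * real (TP x y) + b j * real (TN x y) + f j k l) / g j k l))"
      by (simp only: sum_distrib_left)
    also have "\<dots> = (\<Sum>x\<in>UNIV. \<Sum>j=1..J. \<Sum>y\<in>UNIV. c k x * d l y *
        ((a j * real (TP x y) + b j * real (TN x y) + f j k l) / g j k l))"
      by (rule sum.cong[OF refl], rule sum.swap)
    also have "\<dots> = (\<Sum>j=1..J. \<Sum>x\<in>UNIV. \<Sum>y\<in>UNIV. c k x * d l y *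
        ((a j * real (TP x y) + b j * real (TN x y) + f j k l) / g j k l))"
      by (rule sum.swap)
    also have "\<dots> = (\<Sum>j=1..J.
       (1 / g j k l) * (a j * dotv (marg P True k) (marg Q True l)
                       + b j * dotv (marg P False k) (marg Q False l)
                       + f j k l * cnt P k * cnt Q l))"
    proof (rule sum.cong[OF refl])
      fix j
      have pw: "c k x * d l y * ((a j * real (TP x y) + b j * real (TN x y) + f j k l) / g j k l) =
        (1 / g j k l) * (a j * (c k x * d l y * real (TP x y)) + b j * (c k x * d l y * real (TN x y))
           + f j k l * (c k x * d l y))" for x y
        by (simp add: divide_inverse algebra_simps)
      have "(\<Sum>x\<in>UNIV. \<Sum>y\<in>UNIV. c k x * d l y *
        ((a j * real (TP x y) + b j * real (TN x y) + f j k l) / g j k l)) =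
        (1 / g j k l) * (a j * (\<Sum>x\<in>UNIV. \<Sum>y\<in>UNIV. c k x * d l y * real (TP x y))
          + b j * (\<Sum>x\<in>UNIV. \<Sum>y\<in>UNIV. c k x * d l y * real (TN x y))
          + f j k l * (\<Sum>x\<in>UNIV. \<Sum>y\<in>UNIV. c k x * d l y))"
        unfolding pw by (simp add: sum.distrib sum_distrib_left distrib_left)
      also have "\<dots> = (1 / g j k l) * (a j * dotv (marg P True k) (marg Q True l)
                       + b j * dotv (marg P False k) (marg Q False l)
                       + f j k l * cnt P k * cnt Q l)"
      proof -
        have e1: "(\<Sum>x\<in>UNIV. \<Sum>y\<in>UNIV. c k x * d l y * real (TP x y)) = dotv (marg P True k) (marg Q True l)"
          unfolding dot_TP dotv_def marg_sum c_def d_def by simp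
        have e2: "(\<Sum>x\<in>UNIV. \<Sum>y\<in>UNIV. c k x * d l y * real (TN x y)) = dotv (marg P False k) (marg Q False l)"
          unfolding dot_TN dotv_def marg_sum c_def d_def by simp
        have e3: "(\<Sum>x\<in>UNIV. \<Sum>y\<in>UNIV. c k x * d l y) = cnt P k * cnt Q l"
          unfolding cnt_sum c_def d_def sum_product by simp
        show ?thesis unfolding e1 e2 e3 by (simp add: mult.assoc)
      qed
      finally show "(\<Sum>x\<in>UNIV. \<Sum>y\<in>UNIV. c k x * d l y *
        ((a j * real (TP x y) + b j * real (TN x y) + f j k l) / g j k l)) =
        (1 / g j k l) * (a j * dotv (marg P True k) (marg Q True l)
                       + b j * dotv (marg P False k) (marg Q False l)
                       + f j k l * cnt P k * cnt Q l)" .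
    qed
    finally show "(\<Sum>x\<in>UNIV. \<Sum>y\<in>UNIV. c k x * d l y *
        (\<Sum>j=1..J. (a j * real (TP x y) + b j * real (TN x y) + f j k l) / g j k l)) =
      (\<Sum>j=1..J.
       (1 / g j k l) * (a j * dotv (marg P True k) (marg Q True l)
                       + b j * dotv (marg P False k) (marg Q False l)
                       + f j k l * cnt P k * cnt Q l))" .
  qed
  finally show ?thesis .
qed
end
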